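(* Let $\mathcal{L}$ be a block diagram language with compositional semantics $[\![\cdot]\!] : \mathcal{L} \to \mathcal{S}$ into a traced symmetric monoidal category $(\mathcal{S},\otimes,\mathsf{Tr})$, and let $H : \mathcal{S} \to \mathcal{H}$ be a verification functor (as defined in the context). Then the formal system $\mathcal{H}(\mathcal{L},[\![\cdot]\!],H)$ is sound and complete: for every block diagram $A$ of $\mathcal{L}$ with $[\![A]\!] : X \to Y$ and every $P \in H(X)$, $Q \in H(Y)$, the triple $\{P\}\,A\,\{Q\}$ is derivable in $\mathcal{H}(\mathcal{L},[\![\cdot]\!],H)$ if and only if $(P,Q) \in H([\![A]\!])$.
   Context: Hoare category: a relation $r \subseteq X \times Y$ between pre-ordered sets $(X,\sqsubseteq_X)$, $(Y,\sqsubseteq_Y)$ is monotone if $(P,Q)\in r$, $P' \sqsubseteq_X P$ and $Q \sqsubseteq_Y Q'$ imply $(P',Q')\in r$. $\mathcal{H}$ is the category of pre-ordered sets and monotone relations (composition is relational composition, $(P,R)\in s\circ r$ iff $\exists Q\,((P,Q)\in r \wedge (Q,R)\in s)$); it is a traced symmetric monoidal category with monoidal product the cartesian product of pre-orders (coordinatewise order), product of relations $r\times s = \{((P,R),(Q,S)) : (P,Q)\in r,(R,S)\in s\}$, and trace: for $r \subseteq (X\times Z)\times(Y\times Z)$, $(P,R)\in\mathsf{Tr}(r)$ iff there is $Q\in Z$ with $((P,Q),(R,Q))\in r$. Block diagram language: a set $\mathcal{L}^b$ of basic diagrams, closed under the constructors $\mathsf{Seq}(A,B)$ (sequential composition), $\mathsf{Par}(A,B)$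 (parallel composition) and $\mathsf{Fb}(A)$ (feedback). The semantics is compositional: $[\![\mathsf{Seq}(A,B)]\!] = [\![B]\!]\circ[\![A]\!]$, $[\![\mathsf{Par}(A,B)]\!] = [\![A]\!]\otimes[\![B]\!]$, $[\![\mathsf{Fb}(A)]\!] = \mathsf{Tr}([\![A]\!])$, where $\mathsf{Fb}(A)$ is formed only when $[\![A]\!] : X\otimes Z\to Y\otimes Z$, giving $\mathsf{Tr}([\![A]\!]) : X\to Y$. Verification functor: a mapping $H$ assigning to each object $X$ in the image of $[\![\cdot]\!]$ a pre-ordered set $H(X)$, with $H(X\otimes Y) = H(X)\times H(Y)$, and to each morphism $f:X\to Y$ in that image a monotone relation $H(f)\subseteq H(X)\times H(Y)$, such that for all diagrams $A,B$: $H([\![\mathsf{Seq}(A,B)]\!]) = H([\![B]\!])\circ H([\![A]\!])$, $H([\![\mathsf{Par}(A,B)]\!]) = H([\![A]\!])\times H([\![B]\!])$, and $H([\![\mathsf{Fb}(A)]\!]) = \mathsf{Tr}_{\mathcal{H}}(H([\![A]\!]))$. The system $\mathcal{H}(\mathcal{L},[\![\cdot]\!],H)$ derives triples $\{P\}A\{Q\}$ by the rules: (Ax) $\{P\}A\{Q\}$ with no premises, provided $A\in\mathcal{L}^b$ and $(P,Q)\in H([\![A]\!])$; (Con) from $\{P\}A\{Q\}$ infer $\{P'\}A\{Q'\}$ provided $P'\sqsubseteq P$ and $Q\sqsubseteq Q'$; (Par) from $\{P\}A\{Q\}$ and $\{R\}B\{S\}$ infer $\{(P,R)\}\mathsf{Par}(A,B)\{(Q,S)\}$;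 (Seq) from $\{P\}A\{Q\}$ and $\{Q\}B\{R\}$ infer $\{P\}\mathsf{Seq}(A,B)\{R\}$; (Fb) from $\{(P,Q)\}A\{(R,Q)\}$ infer $\{P\}\mathsf{Fb}(A)\{R\}$. *)

theory Defs
  imports Main
begin

datatype 'b diag = Basic 'b | Seq "'b diag" "'b diag" | Par "'b diag" "'b diag" | Fb "'b diag"

text \<open>Universe of elements of the pre-ordered sets H(X); the cartesian product
  H(X) x H(Y) is represented by the pairs VPair p q.\<close>
datatype 'a val = Atom 'a | VPair "'a val" "'a val"

text \<open>Objects 'o of the semantic category S with tensor ot, morphisms 'm with
  domain sdom and codomain scod; sem is the semantic map [[.]].\<close>
inductive wf_diag :: "('m \<Rightarrow> 'o) \<Rightarrow> ('m \<Rightarrow> 'o) \<Rightarrow> ('o \<Rightarrow> 'o \<Rightarrow> 'o) \<Rightarrow> ('b diag \<Rightarrow> 'm) \<Rightarrow> 'b diag \<Rightarrow> bool"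
  for sdom scod ot sem where
  wf_Basic: "wf_diag sdom scod ot sem (Basic b)"
| wf_Seq: "wf_diag sdom scod ot sem A \<Longrightarrow> wf_diag sdom scod ot sem B \<Longrightarrow>
     scod (sem A) = sdom (sem B) \<Longrightarrow> wf_diag sdom scod ot sem (Seq A B)"
| wf_Par: "wf_diag sdom scod ot sem A \<Longrightarrow> wf_diag sdom scod ot sem B \<Longrightarrow>
     wf_diag sdom scod ot sem (Par A B)"
| wf_Fb: "wf_diag sdom scod ot sem A \<Longrightarrow> sdom (sem A) = ot X Z \<Longrightarrow> scod (sem A) = ot Y Z \<Longrightarrow>
     wf_diag sdom scod ot sem (Fb A)"

definition compositional_sem ::
  "('m \<Rightarrow> 'o) \<Rightarrow> ('m \<Rightarrow> 'o) \<Rightarrow> ('o \<Rightarrow> 'o \<Rightarrow> 'o) \<Rightarrow> ('m \<Rightarrow> 'm \<Rightarrow> 'm) \<Rightarrow> ('m \<Rightarrow> 'm \<Rightarrow> 'm)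
    \<Rightarrow> ('m \<Rightarrow> 'm) \<Rightarrow> ('b diag \<Rightarrow> 'm) \<Rightarrow> bool" where
  "compositional_sem sdom scod ot cmp tns tr sem \<longleftrightarrow>
     (\<forall>A B. wf_diag sdom scod ot sem (Seq A B) \<longrightarrow>
        sem (Seq A B) = cmp (sem B) (sem A) \<and>
        sdom (sem (Seq A B)) = sdom (sem A) \<and> scod (sem (Seq A B)) = scod (sem B)) \<and>
     (\<forall>A B. wf_diag sdom scod ot sem (Par A B) \<longrightarrow>
        sem (Par A B) = tns (sem A) (sem B) \<and>
        sdom (sem (Par A B)) = ot (sdom (sem A)) (sdom (sem B)) \<and>
        scod (sem (Par A B)) = ot (scod (sem A)) (scod (sem B))) \<and>
     (\<forall>A X Y Z. wf_diag sdom scod ot sem A \<and> sdom (sem A) = ot X Z \<and> scod (sem A) = ot Y Z \<longrightarrow>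
        sem (Fb A) = tr (sem A) \<and> sdom (sem (Fb A)) = X \<and> scod (sem (Fb A)) = Y)"

definition rel_prod :: "('a val \<times> 'a val) set \<Rightarrow> ('a val \<times> 'a val) set \<Rightarrow> ('a val \<times> 'a val) set" where
  "rel_prod r s = {(VPair P R, VPair Q S) | P Q R S. (P, Q) \<in> r \<and> (R, S) \<in> s}"

definition rel_trace :: "('a val \<times> 'a val) set \<Rightarrow> ('a val \<times> 'a val) set" where
  "rel_trace r = {(P, R). \<exists>Q. (VPair P Q, VPair R Q) \<in> r}"

text \<open>Verification functor: HC X is the carrier of H(X), HL X its pre-order,
  HR f the monotone relation H(f).  Relational composition H(g) o H(f) is
  written HR f O HR g in Isabelle.\<close>
definition verification_functor ::
  "('m \<Rightarrow> 'o) \<Rightarrow> ('m \<Rightarrow> 'o) \<Rightarrow> ('o \<Rightarrow> 'o \<Rightarrow> 'o) \<Rightarrow> ('b diag \<Rightarrow> 'm)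
    \<Rightarrow> ('o \<Rightarrow> 'a val set) \<Rightarrow> ('o \<Rightarrow> 'a val \<Rightarrow> 'a val \<Rightarrow> bool) \<Rightarrow> ('m \<Rightarrow> ('a val \<times> 'a val) set) \<Rightarrow> bool" where
  "verification_functor sdom scod ot sem HC HL HR \<longleftrightarrow>
     (\<forall>X. (\<forall>p\<in>HC X. HL X p p) \<and>
          (\<forall>p\<in>HC X. \<forall>q\<in>HC X. \<forall>r\<in>HC X. HL X p q \<longrightarrow> HL X q r \<longrightarrow> HL X p r)) \<and>
     (\<forall>X Y. HC (ot X Y) = {VPair p q | p q. p \<in> HC X \<and> q \<in> HC Y} \<and>
            (\<forall>p q p' q'. HL (ot X Y) (VPair p q) (VPair p' q') \<longleftrightarrow> HL X p p' \<and> HL Y q q')) \<and>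
     (\<forall>A. wf_diag sdom scod ot sem A \<longrightarrow>
        HR (sem A) \<subseteq> HC (sdom (sem A)) \<times> HC (scod (sem A)) \<and>
        (\<forall>P Q P' Q'. (P, Q) \<in> HR (sem A) \<longrightarrow> P' \<in> HC (sdom (sem A)) \<longrightarrow> HL (sdom (sem A)) P' P \<longrightarrow>
            Q' \<in> HC (scod (sem A)) \<longrightarrow> HL (scod (sem A)) Q Q' \<longrightarrow> (P', Q') \<in> HR (sem A))) \<and>
     (\<forall>A B. wf_diag sdom scod ot sem (Seq A B) \<longrightarrow> HR (sem (Seq A B)) = HR (sem A) O HR (sem B)) \<and>
     (\<forall>A B. wf_diag sdom scod ot sem (Par A B) \<longrightarrow> HR (sem (Par A B)) = rel_prod (HR (sem A)) (HR (sem B))) \<and>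
     (\<forall>A. wf_diag sdom scod ot sem (Fb A) \<longrightarrow> HR (sem (Fb A)) = rel_trace (HR (sem A)))"

inductive derivable ::
  "('m \<Rightarrow> 'o) \<Rightarrow> ('m \<Rightarrow> 'o) \<Rightarrow> ('o \<Rightarrow> 'o \<Rightarrow> 'o) \<Rightarrow> ('b diag \<Rightarrow> 'm)
    \<Rightarrow> ('o \<Rightarrow> 'a val set) \<Rightarrow> ('o \<Rightarrow> 'a val \<Rightarrow> 'a val \<Rightarrow> bool) \<Rightarrow> ('m \<Rightarrow> ('a val \<times> 'a val) set)
    \<Rightarrow> 'a val \<Rightarrow> 'b diag \<Rightarrow> 'a val \<Rightarrow> bool"
  for sdom scod ot sem HC HL HR where
  Ax: "(P, Q) \<in> HR (sem (Basic b)) \<Longrightarrow> derivable sdom scod ot sem HC HL HR P (Basic b) Q"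
| Con: "derivable sdom scod ot sem HC HL HR P A Q \<Longrightarrow>
     P' \<in> HC (sdom (sem A)) \<Longrightarrow> HL (sdom (sem A)) P' P \<Longrightarrow>
     Q' \<in> HC (scod (sem A)) \<Longrightarrow> HL (scod (sem A)) Q Q' \<Longrightarrow>
     derivable sdom scod ot sem HC HL HR P' A Q'"
| ParR: "derivable sdom scod ot sem HC HL HR P A Q \<Longrightarrow> derivable sdom scod ot sem HC HL HR R B S \<Longrightarrow>
     derivable sdom scod ot sem HC HL HR (VPair P R) (Par A B) (VPair Q S)"
| SeqR: "derivable sdom scod ot sem HC HL HR P A Q \<Longrightarrow> derivable sdom scod ot sem HC HL HR Q B R \<Longrightarrow>
     wf_diag sdom scod ot sem (Seq A B) \<Longrightarrow> derivable sdom scod ot sem HC HL HR P (Seq A B) R"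
| FbR: "derivable sdom scod ot sem HC HL HR (VPair P Q) A (VPair R Q) \<Longrightarrow>
     wf_diag sdom scod ot sem (Fb A) \<Longrightarrow> derivable sdom scod ot sem HC HL HR P (Fb A) R"

end

theory Submission
  imports Defs
begin

lemma sound:
  assumes V: "verification_functor sdom scod ot sem HC HL HR"
  shows "derivable sdom scod ot sem HC HL HR P A Q \<Longrightarrow> wf_diag sdom scod ot sem A \<Longrightarrow> (P, Q) \<in> HR (sem A)"
proof (induction rule: derivable.induct)
  case (Ax P Q b) then show ?case by simp
next
  case (Con P A Q P' Q')
  have M: "\<forall>P Q P' Q'. (P, Q) \<in> HR (sem A) \<longrightarrow> P' \<in> HC (sdom (sem A)) \<longrightarrow> HL (sdom (sem A)) P' P \<longrightarrow>
            Q' \<in> HC (scod (sem A)) \<longrightarrow> HL (scod (sem A)) Q Q' \<longrightarrow> (P', Q') \<in> HR (sem A)"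
    using V Con.prems unfolding verification_functor_def by blast
  show ?case using M Con by blast
next
  case (ParR P A Q R B S)
  from ParR.prems have WA: "wf_diag sdom scod ot sem A" "wf_diag sdom scod ot sem B"
    by (auto elim: wf_diag.cases)
  have "HR (sem (Par A B)) = rel_prod (HR (sem A)) (HR (sem B))"
    using V ParR.prems unfolding verification_functor_def by blast
  with ParR.IH WA show ?case unfolding rel_prod_def by auto
next
  case (SeqR P A Q B R)
  from SeqR.hyps(3) have WA: "wf_diag sdom scod ot sem A" "wf_diag sdom scod ot sem B"
    by (auto elim: wf_diag.cases)
  have "HR (sem (Seq A B)) = HR (sem A) O HR (sem B)"
    using V SeqR.hyps(3) unfolding verification_functor_def by blast
  with SeqR.IH WA show ?case by auto
next
  case (FbR P Q A R)
  from FbR.hyps(2) have WA: "wf_diag sdom scod ot sem A" by (auto elim: wf_diag.cases)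
  have "HR (sem (Fb A)) = rel_trace (HR (sem A))"
    using V FbR.hyps(2) unfolding verification_functor_def by blast
  with FbR.IH WA show ?case unfolding rel_trace_def by auto
qed

lemma complete:
  assumes V: "verification_functor sdom scod ot sem HC HL HR"
  shows "wf_diag sdom scod ot sem A \<Longrightarrow> (P, Q) \<in> HR (sem A) \<Longrightarrow> derivable sdom scod ot sem HC HL HR P A Q"
proof (induction A arbitrary: P Q rule: wf_diag.induct)
  case (wf_Basic b) then show ?case by (rule Ax)
next
  case (wf_Seq A B)
  have W: "wf_diag sdom scod ot sem (Seq A B)" using wf_Seq by (simp add: wf_diag.wf_Seq)
  have "HR (sem (Seq A B)) = HR (sem A) O HR (sem B)"
    using V W unfolding verification_functor_def by blast
  then have "(P, Q) \<in> HR (sem A) O HR (sem B)" using wf_Seq.prems by simp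
  then obtain R where "(P,R) \<in> HR (sem A)" "(R,Q) \<in> HR (sem B)" by blast
  with wf_Seq.IH W show ?case by (meson SeqR)
next
  case (wf_Par A B)
  have W: "wf_diag sdom scod ot sem (Par A B)" using wf_Par by (simp add: wf_diag.wf_Par)
  have "HR (sem (Par A B)) = rel_prod (HR (sem A)) (HR (sem B))"
    using V W unfolding verification_functor_def by blast
  then have "(P, Q) \<in> rel_prod (HR (sem A)) (HR (sem B))" using wf_Par.prems by simp
  then obtain P1 P2 Q1 Q2 where "P = VPair P1 P2" "Q = VPair Q1 Q2"
    "(P1,Q1) \<in> HR (sem A)" "(P2,Q2) \<in> HR (sem B)" unfolding rel_prod_def by blast
  with wf_Par.IH show ?case by (simp add: ParR)
next
  case (wf_Fb A X Z Y)
  have W: "wf_diag sdom scod ot sem (Fb A)" using wf_Fb.hyps by (rule wf_diag.wf_Fb)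
  have "HR (sem (Fb A)) = rel_trace (HR (sem A))"
    using V W unfolding verification_functor_def by blast
  then have "(P, Q) \<in> rel_trace (HR (sem A))" using wf_Fb.prems by simp
  then obtain R where "(VPair P R, VPair Q R) \<in> HR (sem A)" unfolding rel_trace_def by blast
  with wf_Fb.IH W show ?case by (meson FbR)
qed

theorem theorem3p4:
  fixes sdom scod :: "'m \<Rightarrow> 'o" and ot :: "'o \<Rightarrow> 'o \<Rightarrow> 'o"
    and cmp tns :: "'m \<Rightarrow> 'm \<Rightarrow> 'm" and tr :: "'m \<Rightarrow> 'm"
    and sem :: "'b diag \<Rightarrow> 'm"
    and HC :: "'o \<Rightarrow> 'a val set" and HL :: "'o \<Rightarrow> 'a val \<Rightarrow> 'a val \<Rightarrow> bool"
    and HR :: "'m \<Rightarrow> ('a val \<times> 'a val) set"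
  assumes "compositional_sem sdom scod ot cmp tns tr sem"
    and "verification_functor sdom scod ot sem HC HL HR"
    and "wf_diag sdom scod ot sem A"
    and "P \<in> HC (sdom (sem A))" and "Q \<in> HC (scod (sem A))"
  shows "derivable sdom scod ot sem HC HL HR P A Q \<longleftrightarrow> (P, Q) \<in> HR (sem A)"
  using sound[OF assms(2)] complete[OF assms(2)] assms(3) by blast

end
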